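(* Let $k\ge 3$ be an integer and $F$ a field admitting a primitive $(k-1)$-th root of unity. Let $A,B$ be associative $F$-algebras and $\varphi:A\to B$ an $F$-linear map with $\varphi(P_k(A))\subseteq P_k(B)$. If $e,f\in P_k(A)$ satisfy $ef=fe=0$, then $\varphi(e)\varphi(f)=\varphi(f)\varphi(e)$. If moreover $\mathrm{char}(F)\nmid k$, then $\varphi(e)\varphi(f)=\varphi(f)\varphi(e)=0$.
   Context: For a ring $A$ and an integer $k\ge 2$, $P_k(A)=\{a\in A: a^k=a\}$ is the set of $k$-potents. *)

theory Defs
  imports Main "HOL.Vector_Spaces"
begin

text \<open>Associative (not necessarily unital) algebra over a field: a ring (class ring:
  associative multiplication, no unit required) with a vector space scalar action
  compatible with multiplication.\<close>
definition algebra_over :: "('f::field \<Rightarrow> 'a::ring \<Rightarrow> 'a) \<Rightarrow> bool" where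
  "algebra_over s \<longleftrightarrow> Vector_Spaces.vector_space s \<and>
     (\<forall>c x y. s c (x * y) = s c x * y \<and> s c (x * y) = x * s c y)"

text \<open>Positive powers in a possibly non-unital ring: rpow a n = a^(n+1).\<close>
primrec rpow :: "'a::ring \<Rightarrow> nat \<Rightarrow> 'a" where
  "rpow a 0 = a"
| "rpow a (Suc n) = a * rpow a n"

definition kpow :: "'a::ring \<Rightarrow> nat \<Rightarrow> 'a" where
  "kpow a k = rpow a (k - 1)"

definition potents :: "nat \<Rightarrow> 'a::ring set" where
  "potents k = {a. kpow a k = a}"

definition primitive_root_of_unity :: "nat \<Rightarrow> 'f::field \<Rightarrow> bool" where
  "primitive_root_of_unity n w \<longleftrightarrow> w ^ n = 1 \<and> (\<forall>j. 0 < j \<and> j < n \<longrightarrow> w ^ j \<noteq> 1)"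

end

theory Submission
  imports Defs "HOL-Computational_Algebra.Primes"
begin

lemma rpow_comm: "rpow a m * a = a * rpow (a::'a::ring) m"
  by (induction m) (simp_all add: mult.assoc)

lemma rpow_zero_right: "(x::'a::ring) * f = 0 \<Longrightarrow> x * rpow f m = 0"
  by (induction m) (simp_all add: mult.assoc[symmetric])

lemma rpow_comm2: "(a::'a::ring) * b = b * a \<Longrightarrow> b * rpow a m = rpow a m * b"
  by (induction m) (simp_all add: mult.assoc[symmetric], metis mult.assoc)

lemma orth_pow:
  assumes alg: "algebra_over s" and ef: "e * f = 0" and fe: "f * e = 0"
  shows "rpow (e + s c f) m = rpow e m + s (c ^ Suc m) (rpow (f::'a::ring) m)"
proof -
  interpret V: vector_space s using alg unfolding algebra_over_def by auto
  have m1: "\<And>c x y. s c (x * y) = s c x * y" and m2: "\<And>c x y. s c (x * y) = x * s c y"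
    using alg unfolding algebra_over_def by blast+
  show ?thesis
  proof (induction m)
    case 0 then show ?case by simp
  next
    case (Suc m)
    have z1: "e * rpow f m = 0" by (rule rpow_zero_right[OF ef])
    have z2: "f * rpow e m = 0" by (rule rpow_zero_right[OF fe])
    have "rpow (e + s c f) (Suc m) = (e + s c f) * (rpow e m + s (c ^ Suc m) (rpow f m))"
      using Suc by simp
    also have "\<dots> = e * rpow e m + s (c ^ Suc m) (e * rpow f m) + s c (f * rpow e m)
        + s c (s (c ^ Suc m) (f * rpow f m))"
      by (simp add: algebra_simps m1[symmetric] m2[symmetric])
    also have "\<dots> = rpow e (Suc m) + s (c ^ Suc (Suc m)) (rpow f (Suc m))"
      using z1 z2 by (simp add: mult.commute)
    finally show ?case .
  qed
qed

fun cf :: "'b::ring \<Rightarrow> 'b \<Rightarrow> nat \<Rightarrow> nat \<Rightarrow> 'b" where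
  "cf a b 0 i = (if i = 0 then a else if i = 1 then b else 0)"
| "cf a b (Suc m) i = a * cf a b m i + (if i = 0 then 0 else b * cf a b m (i - 1))"

lemma cf_big: "i > Suc m \<Longrightarrow> cf a b m i = 0"
  by (induction m arbitrary: i) auto

lemma cf_0: "cf a b m 0 = rpow a m"
  by (induction m) auto

lemma cf_top: "cf a b m (Suc m) = rpow b m"
  by (induction m) (auto simp: cf_big)

lemma cf_expand:
  assumes alg: "algebra_over s"
  shows "rpow (a + s t b) m = (\<Sum>i\<le>Suc m. s (t ^ i) (cf a b m i))"
proof -
  interpret V: vector_space s using alg unfolding algebra_over_def by auto
  have m1: "\<And>c x y. s c (x * y) = s c x * y" and m2: "\<And>c x y. s c (x * y) = x * s c y"
    using alg unfolding algebra_over_def by blast+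
  show ?thesis
  proof (induction m)
    case 0
    then show ?case by (simp add: numeral_2_eq_2)
  next
    case (Suc m)
    let ?c = "cf a b m"
    have "rpow (a + s t b) (Suc m) = (a + s t b) * (\<Sum>i\<le>Suc m. s (t ^ i) (?c i))"
      using Suc by simp
    also have "\<dots> = a * (\<Sum>i\<le>Suc m. s (t ^ i) (?c i)) + s t b * (\<Sum>i\<le>Suc m. s (t ^ i) (?c i))"
      by (simp only: distrib_right)
    also have "a * (\<Sum>i\<le>Suc m. s (t ^ i) (?c i)) = (\<Sum>i\<le>Suc m. s (t ^ i) (a * ?c i))"
      by (simp only: sum_distrib_left m2[symmetric])
    also have "s t b * (\<Sum>i\<le>Suc m. s (t ^ i) (?c i)) = (\<Sum>i\<le>Suc m. s (t ^ Suc i) (b * ?c i))"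
    proof -
      have "s t b * (\<Sum>i\<le>Suc m. s (t ^ i) (?c i)) = (\<Sum>i\<le>Suc m. s t b * s (t ^ i) (?c i))"
        by (simp only: sum_distrib_left)
      also have "\<dots> = (\<Sum>i\<le>Suc m. s (t ^ Suc i) (b * ?c i))"
      proof (rule sum.cong[OF refl])
        fix i
        have "s t b * s (t ^ i) (?c i) = s t (b * s (t ^ i) (?c i))" by (simp only: m1)
        also have "\<dots> = s t (s (t ^ i) (b * ?c i))" by (simp only: m2)
        also have "\<dots> = s (t ^ Suc i) (b * ?c i)" by simp
        finally show "s t b * s (t ^ i) (?c i) = s (t ^ Suc i) (b * ?c i)" .
      qed
      finally show ?thesis .
    qed
    also have "(\<Sum>i\<le>Suc m. s (t ^ i) (a * ?c i)) = (\<Sum>i\<le>Suc (Suc m). s (t ^ i) (a * ?c i))"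
      by (simp add: cf_big)
    also have "(\<Sum>i\<le>Suc m. s (t ^ Suc i) (b * ?c i)) =
       (\<Sum>i\<le>Suc (Suc m). (if i = 0 then 0 else s (t ^ i) (b * ?c (i - 1))))"
      by (subst sum.atMost_Suc_shift[of _ "Suc m"]) simp
    also have "(\<Sum>i\<le>Suc (Suc m). s (t ^ i) (a * ?c i)) + \<dots> =
       (\<Sum>i\<le>Suc (Suc m). s (t ^ i) (cf a b (Suc m) i))"
      by (simp add: sum.distrib[symmetric] V.scale_right_distrib cong: if_cong, intro sum.cong, auto)
    finally show ?case .
  qed
qed

lemma cf1_comm: "a * cf a b m 1 - cf a b m 1 * a = rpow a m * b - b * rpow (a::'a::ring) m"
proof (induction m)
  case 0 then show ?case by simp
next
  case (Suc m)
  have e: "cf a b (Suc m) 1 = a * cf a b m 1 + b * rpow a m" by (simp add: cf_0)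
  have "a * cf a b (Suc m) 1 - cf a b (Suc m) 1 * a =
     a * (a * cf a b m 1 - cf a b m 1 * a) + a * b * rpow a m - b * (rpow a m * a)"
    unfolding e by (simp add: algebra_simps)
  also have "\<dots> = rpow a (Suc m) * b - b * rpow a (Suc m)"
    unfolding Suc by (simp add: algebra_simps rpow_comm)
  finally show ?case .
qed

lemma cf1_commuting:
  assumes alg: "algebra_over s" and ab: "a * b = b * (a::'a::ring)"
  shows "a * cf a b m 1 = s (of_nat (Suc m)) (rpow a m * b)"
proof -
  interpret V: vector_space s using alg unfolding algebra_over_def by auto
  have m1: "\<And>c x y. s c (x * y) = s c x * y" and m2: "\<And>c x y. s c (x * y) = x * s c y"
    using alg unfolding algebra_over_def by blast+
  show ?thesis
  proof (induction m)
    case 0 then show ?case by simp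
  next
    case (Suc m)
    have "a * cf a b (Suc m) 1 = a * (a * cf a b m 1) + a * (b * rpow a m)"
      by (simp add: cf_0 distrib_left)
    also have "\<dots> = s (of_nat (Suc m)) (rpow a (Suc m) * b) + rpow a (Suc m) * b"
      unfolding Suc by (simp add: m2[symmetric] mult.assoc rpow_comm2[OF ab])
    also have "\<dots> = s (of_nat (Suc (Suc m))) (rpow a (Suc m) * b)"
      by (metis add.commute V.scale_left_distrib V.scale_one of_nat_Suc)
    finally show ?case .
  qed
qed

lemma prim_nz:
  assumes pr: "primitive_root_of_unity n (w::'f::field)" and n: "n > 0"
  shows "of_nat n \<noteq> (0::'f)"
proof
  assume h: "of_nat n = (0::'f)"
  have cp: "CHAR('f) > 0" using h n CHAR_pos_iff by blast
  have pp: "prime CHAR('f)" using prime_CHAR_semidom[OF cp] .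
  have "CHAR('f) dvd n" using h of_nat_eq_0_iff_char_dvd by blast
  then obtain m where nm: "n = CHAR('f) * m" by blast
  have p2: "CHAR('f) \<ge> 2" using pp prime_ge_2_nat by blast
  have mpos: "m > 0" using nm n by (cases m) auto
  have "1 * m < CHAR('f) * m" using p2 mpos by (intro mult_strict_right_mono) auto
  hence mlt: "m < n" using nm by simp
  have "(w ^ m + (-1)) ^ CHAR('f) = (w ^ m) ^ CHAR('f) + (-1) ^ CHAR('f)"
    by (rule freshmans_dream[OF pp refl])
  also have "(w ^ m) ^ CHAR('f) = w ^ n" by (simp only: nm power_mult[symmetric] mult.commute)
  also have "w ^ n = 1" using pr unfolding primitive_root_of_unity_def by blast
  also have "(-1::'f) ^ CHAR('f) = - (1 ^ CHAR('f))" by (rule minus_power_prime_CHAR[OF refl pp])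
  finally have "(w ^ m - 1) ^ CHAR('f) = 0" by simp
  hence "w ^ m = 1" by simp
  thus False using pr mpos mlt unfolding primitive_root_of_unity_def by blast
qed

lemma prim_sum:
  assumes pr: "primitive_root_of_unity n (w::'f::field)" and n: "n > 0"
  shows "(\<Sum>j<n. w ^ (j * m)) = (if n dvd m then of_nat n else 0)"
proof -
  have wn: "w ^ n = 1" using pr unfolding primitive_root_of_unity_def by blast
  have eq: "(\<Sum>j<n. w ^ (j * m)) = (\<Sum>j<n. (w ^ m) ^ j)"
    by (simp only: power_mult[symmetric] mult.commute)
  show ?thesis
  proof (cases "n dvd m")
    case True
    then obtain q where "m = n * q" by blast
    hence "w ^ m = 1" by (simp add: power_mult wn)
    thus ?thesis using eq True by simp
  next
    case False
    have "w ^ m = (w ^ n) ^ (m div n) * w ^ (m mod n)"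
      by (simp only: power_mult[symmetric] power_add[symmetric] mult_div_mod_eq)
    hence "w ^ m = w ^ (m mod n)" by (simp add: wn)
    moreover have "0 < m mod n" "m mod n < n" using False n by (auto simp: mod_eq_0_iff_dvd[symmetric] intro: Nat.gr0I)
    ultimately have ne: "w ^ m \<noteq> 1" using pr unfolding primitive_root_of_unity_def by metis
    have "(w ^ m) ^ n = (w ^ n) ^ m" by (simp only: power_mult[symmetric] mult.commute)
    hence "(w ^ m) ^ n = 1" by (simp add: wn)
    thus ?thesis using eq False ne by (simp add: sum_gp_strict)
  qed
qed

lemma dvd_aux:
  assumes "(n::nat) \<ge> 2" "i \<le> Suc n"
  shows "n dvd (n - 1 + i) \<longleftrightarrow> (i = 1 \<or> i = Suc n)"
proof (cases i)
  case 0
  then show ?thesis using assms nat_dvd_not_less[of "n - 1" n] by auto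
next
  case (Suc j)
  have "n - 1 + i = j + n" using Suc assms by simp
  hence "n dvd (n - 1 + i) \<longleftrightarrow> n dvd j" by simp
  also have "\<dots> \<longleftrightarrow> j = 0 \<or> j = n"
  proof
    assume "n dvd j"
    then obtain q where "j = n * q" by blast
    moreover have "j \<le> n" using Suc assms by simp
    ultimately show "j = 0 \<or> j = n" using assms
      by (cases q) (auto simp: le_Suc_eq)
  qed auto
  finally show ?thesis using Suc by auto
qed
theorem lemma7p2:
  fixes k :: nat
    and sA :: "'f::field \<Rightarrow> 'a::ring \<Rightarrow> 'a"
    and sB :: "'f \<Rightarrow> 'b::ring \<Rightarrow> 'b"
    and \<phi> :: "'a \<Rightarrow> 'b"
    and e f :: 'a
  assumes "k \<ge> 3"
    and "\<exists>w::'f. primitive_root_of_unity (k - 1) w"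
    and "algebra_over sA" and "algebra_over sB"
    and "Vector_Spaces.linear sA sB \<phi>"
    and "\<phi> ` potents k \<subseteq> potents k"
    and "e \<in> potents k" and "f \<in> potents k"
    and "e * f = 0" and "f * e = 0"
  shows "\<phi> e * \<phi> f = \<phi> f * \<phi> e
    \<and> (\<not> CHAR('f) dvd k \<longrightarrow> \<phi> e * \<phi> f = 0 \<and> \<phi> f * \<phi> e = 0)"
proof -
  note k3 = assms(1) and algA = assms(3) and algB = assms(4) and lin = assms(5)
    and phiP = assms(6) and eP = assms(7) and fP = assms(8) and ef = assms(9) and fe = assms(10)
  define n where "n = k - 1"
  have kn: "k = Suc n" and n2: "n \<ge> 2" using k3 unfolding n_def by auto
  obtain w :: 'f where pr: "primitive_root_of_unity n w" using assms(2) unfolding n_def by blast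
  have wn: "w ^ n = 1" using pr unfolding primitive_root_of_unity_def by blast
  interpret A: vector_space sA using algA unfolding algebra_over_def by blast
  interpret B: vector_space sB using algB unfolding algebra_over_def by blast
  interpret L: linear sA sB \<phi> by (rule lin)
  have potk: "\<And>x::'c::ring. x \<in> potents k \<longleftrightarrow> rpow x n = x"
    unfolding potents_def kpow_def n_def by simp
  define a where "a = \<phi> e"
  define b where "b = \<phi> f"
  have eE: "rpow e n = e" and fF: "rpow f n = f" using eP fP potk by auto
  have aA: "rpow a n = a" unfolding a_def using phiP eP potk by blast
  have bB: "rpow b n = b" unfolding b_def using phiP fP potk by blast
  define C where "C = cf a b n"
  have pot: "(\<Sum>i\<le>Suc n. sB ((w ^ j) ^ i) (C i)) = a + sB (w ^ j) b" for j
  proof -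
    have wj: "(w ^ j) ^ Suc n = w ^ j"
      by (simp add: power_mult[symmetric] mult.commute[of j n]) (simp add: power_mult wn)
    have "rpow (e + sA (w ^ j) f) n = e + sA (w ^ j) f"
      using orth_pow[OF algA ef fe, of "w ^ j" n] eE fF wj by simp
    hence "e + sA (w ^ j) f \<in> potents k" using potk by blast
    hence "\<phi> (e + sA (w ^ j) f) \<in> potents k" using phiP by blast
    moreover have "\<phi> (e + sA (w ^ j) f) = a + sB (w ^ j) b"
      unfolding a_def b_def by (simp add: L.add L.scale)
    ultimately have "rpow (a + sB (w ^ j) b) n = a + sB (w ^ j) b" using potk by metis
    thus ?thesis using cf_expand[OF algB, of a "w ^ j" b n] unfolding C_def by simp
  qed
  define W where "W j = w ^ (j * (n - 1))" for j
  have "(\<Sum>j<n. sB (W j) (\<Sum>i\<le>Suc n. sB ((w ^ j) ^ i) (C i)))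
      = (\<Sum>j<n. sB (W j) (a + sB (w ^ j) b))"
    using pot by simp
  moreover have "(\<Sum>j<n. sB (W j) (\<Sum>i\<le>Suc n. sB ((w ^ j) ^ i) (C i)))
      = sB (of_nat n) (C 1) + sB (of_nat n) b"
  proof -
    have "(\<Sum>j<n. sB (W j) (\<Sum>i\<le>Suc n. sB ((w ^ j) ^ i) (C i)))
        = (\<Sum>j<n. \<Sum>i\<le>Suc n. sB (w ^ (j * (n - 1 + i))) (C i))"
    proof (rule sum.cong[OF refl])
      fix j
      have h: "W j * (w ^ j) ^ i = w ^ (j * (n - 1 + i))" for i
        unfolding W_def by (simp only: power_mult[symmetric] power_add[symmetric] distrib_left mult.commute[of i j])
      thus "sB (W j) (\<Sum>i\<le>Suc n. sB ((w ^ j) ^ i) (C i)) = (\<Sum>i\<le>Suc n. sB (w ^ (j * (n - 1 + i))) (C i))"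
        by (simp only: B.scale_sum_right B.scale_scale h)
    qed
    also have "\<dots> = (\<Sum>i\<le>Suc n. \<Sum>j<n. sB (w ^ (j * (n - 1 + i))) (C i))"
      by (rule sum.swap)
    also have "\<dots> = (\<Sum>i\<le>Suc n. sB (\<Sum>j<n. w ^ (j * (n - 1 + i))) (C i))"
      by (simp add: B.scale_sum_left)
    also have "\<dots> = (\<Sum>i\<le>Suc n. if i = 1 \<or> i = Suc n then sB (of_nat n) (C i) else 0)"
      using prim_sum[OF pr] n2 dvd_aux[OF n2] by (intro sum.cong refl) auto
    also have "\<dots> = (\<Sum>i\<in>{1, Suc n}. sB (of_nat n) (C i))"
      by (subst sum.If_cases) (auto intro!: sum.cong)
    also have "\<dots> = sB (of_nat n) (C 1) + sB (of_nat n) b"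
      using n2 bB unfolding C_def by (simp add: cf_top)
    finally show ?thesis .
  qed
  moreover have "(\<Sum>j<n. sB (W j) (a + sB (w ^ j) b)) = sB (of_nat n) b"
  proof -
    have "(\<Sum>j<n. sB (W j) (a + sB (w ^ j) b)) = (\<Sum>j<n. sB (w ^ (j * (n - 1))) a + sB (w ^ (j * n)) b)"
    proof (rule sum.cong[OF refl])
      fix j
      have "W j * w ^ j = w ^ (j * n)"
        unfolding W_def using n2
        by (simp only: power_add[symmetric]) (simp add: algebra_simps)
      thus "sB (W j) (a + sB (w ^ j) b) = sB (w ^ (j * (n - 1))) a + sB (w ^ (j * n)) b"
        unfolding W_def by (simp add: B.scale_right_distrib)
    qed
    also have "\<dots> = sB (\<Sum>j<n. w ^ (j * (n - 1))) a + sB (\<Sum>j<n. w ^ (j * n)) b"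
      by (simp add: sum.distrib B.scale_sum_left)
    also have "\<dots> = sB (of_nat n) b"
      using prim_sum[OF pr] n2 nat_dvd_not_less[of "n - 1" n] by simp
    finally show ?thesis .
  qed
  ultimately have "sB (of_nat n) (C 1) = 0" by simp
  hence C1: "C 1 = 0" using prim_nz[OF pr] n2 by simp
  have comm: "a * b = b * a"
    using cf1_comm[of a b n] C1 aA unfolding C_def by simp
  moreover have "\<not> CHAR('f) dvd k \<longrightarrow> a * b = 0 \<and> b * a = 0"
  proof
    assume nd: "\<not> CHAR('f) dvd k"
    have "of_nat k \<noteq> (0::'f)" using nd of_nat_eq_0_iff_char_dvd by blast
    moreover have "sB (of_nat k) (a * b) = 0"
      using cf1_commuting[OF algB comm, of n] C1 aA kn unfolding C_def by simp
    ultimately have "a * b = 0" by simp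
    thus "a * b = 0 \<and> b * a = 0" using comm by simp
  qed
  ultimately show ?thesis unfolding a_def b_def by blast
qed

end
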